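(* Let $G$ be a Hausdorff topological group, $Y$ a topological space, $\theta$ a nice partial action of $G$ on $Y$, and $X$ a compact space, with $\hat\theta$ the induced partial action on $C(X,Y)$. Then the enveloping space $C(X,Y)_G$ is homeomorphic to an open subset of $C(X,Y_G)$ (compact-open topology), where $Y_G$ is the enveloping space of $\theta$.
   Context: A topological partial action of $G$ on $Y$ is a family of homeomorphisms $\theta_g\colon Y_{g^{-1}}\to Y_g$ between open subsets with $Y_e=Y$, $\theta_e=\mathrm{id}_Y$, $\theta_{g^{-1}}=\theta_g^{-1}$, $\theta_g\circ\theta_h$ a restriction of $\theta_{gh}$; it is nice if $G*Y=\{(g,y): y\in Y_{g^{-1}}\}$ is open in $G\times Y$ and $(g,y)\mapsto\theta_g(y)$ is continuous on $G*Y$. $C(X,Y)$ has the compact-open topology; $\hat\theta$ has $C(X,Y)_g=\{f: f(X)\subset Y_g\}$ and $\hat\theta_g(f)=\theta_g\circ f$. For a topological partial action on $W$, the enveloping space is $W_G=(G\times W)/R$ with the quotient topology, where $(g,x)R(h,y)$ iff $x\in W_{g^{-1}h}$ and $\theta_{h^{-1}g}(x)=y$. *)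

theory Defs
  imports "HOL-Analysis.Analysis" "HOL-Library.FuncSet"
begin

text \<open>A topological group: a group (type class group_add, written additively but not
necessarily commutative) with a topology on the whole type such that multiplication
and inversion are continuous.\<close>

definition topological_group :: "'g::group_add topology \<Rightarrow> bool" where
  "topological_group TG \<longleftrightarrow>
     topspace TG = UNIV \<and>
     continuous_map (prod_topology TG TG) TG (\<lambda>(g, h). g + h) \<and>
     continuous_map TG TG uminus"

text \<open>A topological partial action of G on the space Y: D g is the open set Y_g and
th g the homeomorphism Y_{g^{-1}} \<rightarrow> Y_g.\<close>

definition topological_partial_action ::
  "'y topology \<Rightarrow> ('g::group_add \<Rightarrow> 'y set) \<Rightarrow> ('g \<Rightarrow> 'y \<Rightarrow> 'y) \<Rightarrow> bool" where
  "topological_partial_action Y D th \<longleftrightarrow>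
     (\<forall>g. openin Y (D g)) \<and>
     D 0 = topspace Y \<and>
     (\<forall>y\<in>topspace Y. th 0 y = y) \<and>
     (\<forall>g. homeomorphic_map (subtopology Y (D (- g))) (subtopology Y (D g)) (th g)) \<and>
     (\<forall>g. \<forall>y\<in>D (- g). th (- g) (th g y) = y) \<and>
     (\<forall>g h y. y \<in> D (- h) \<and> th h y \<in> D (- g) \<longrightarrow>
          y \<in> D (- (g + h)) \<and> th g (th h y) = th (g + h) y)"

definition nice_partial_action ::
  "'g::group_add topology \<Rightarrow> 'y topology \<Rightarrow> ('g \<Rightarrow> 'y set) \<Rightarrow> ('g \<Rightarrow> 'y \<Rightarrow> 'y) \<Rightarrow> bool" where
  "nice_partial_action TG Y D th \<longleftrightarrow>
     topological_partial_action Y D th \<and>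
     openin (prod_topology TG Y) {(g, y). y \<in> D (- g)} \<and>
     continuous_map (subtopology (prod_topology TG Y) {(g, y). y \<in> D (- g)}) Y
        (\<lambda>(g, y). th g y)"

text \<open>Continuous maps X \<rightarrow> Y, represented canonically as extensional functions
(value undefined outside topspace X), with the compact-open topology.\<close>

definition cmaps :: "'x topology \<Rightarrow> 'y topology \<Rightarrow> ('x \<Rightarrow> 'y) set" where
  "cmaps X Y = {f. continuous_map X Y f \<and> f \<in> extensional (topspace X)}"

definition compact_open :: "'x topology \<Rightarrow> 'y topology \<Rightarrow> ('x \<Rightarrow> 'y) topology" where
  "compact_open X Y = topology_generated_by
     {{f \<in> cmaps X Y. f ` K \<subseteq> U} | K U. compactin X K \<and> openin Y U}"

definition cmaps_dom :: "'x topology \<Rightarrow> 'y topology \<Rightarrow> ('g \<Rightarrow> 'y set) \<Rightarrow> 'g \<Rightarrow> ('x \<Rightarrow> 'y) set" where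
  "cmaps_dom X Y D g = {f \<in> cmaps X Y. f ` topspace X \<subseteq> D g}"

definition cmaps_act :: "'x topology \<Rightarrow> ('g \<Rightarrow> 'y \<Rightarrow> 'y) \<Rightarrow> 'g \<Rightarrow> ('x \<Rightarrow> 'y) \<Rightarrow> ('x \<Rightarrow> 'y)" where
  "cmaps_act X th g f = (\<lambda>x\<in>topspace X. th g (f x))"

definition quotient_topology :: "'a topology \<Rightarrow> ('a \<times> 'a) set \<Rightarrow> 'a set topology" where
  "quotient_topology T R =
     topology (\<lambda>U. U \<subseteq> topspace T // R \<and> openin T (\<Union>U))"

definition env_rel :: "'w topology \<Rightarrow> ('g::group_add \<Rightarrow> 'w set) \<Rightarrow> ('g \<Rightarrow> 'w \<Rightarrow> 'w)
    \<Rightarrow> (('g \<times> 'w) \<times> ('g \<times> 'w)) set" where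
  "env_rel W D th = {((g, x), (h, y)). x \<in> topspace W \<and> x \<in> D (- g + h) \<and> th (- h + g) x = y}"

definition enveloping_space :: "'g::group_add topology \<Rightarrow> 'w topology \<Rightarrow> ('g \<Rightarrow> 'w set)
    \<Rightarrow> ('g \<Rightarrow> 'w \<Rightarrow> 'w) \<Rightarrow> ('g \<times> 'w) set topology" where
  "enveloping_space TG W D th = quotient_topology (prod_topology TG W) (env_rel W D th)"

end

theory Submission
  imports Defs
begin

lemma quot_open:
  assumes "equiv (topspace T) R"
  shows "openin (quotient_topology T R) U \<longleftrightarrow> U \<subseteq> topspace T // R \<and> openin T (\<Union>U)"
proof -
  have "istopology (\<lambda>U. U \<subseteq> topspace T // R \<and> openin T (\<Union>U))"
    unfolding istopology_def
  proof (rule conjI; intro allI impI)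
    fix S V assume a: "S \<subseteq> topspace T // R \<and> openin T (\<Union>S)" "V \<subseteq> topspace T // R \<and> openin T (\<Union>V)"
    have "\<Union>(S \<inter> V) = \<Union>S \<inter> \<Union>V"
    proof
      show "\<Union>S \<inter> \<Union>V \<subseteq> \<Union>(S \<inter> V)"
      proof
        fix x assume "x \<in> \<Union>S \<inter> \<Union>V"
        then obtain c d where cd: "c \<in> S" "d \<in> V" "x \<in> c" "x \<in> d" by auto
        then have "c = d" using a assms quotient_disj by (metis disjoint_iff subsetD)
        then show "x \<in> \<Union>(S \<inter> V)" using cd by auto
      qed
    qed auto
    have eq: "\<Union>(S \<inter> V) = \<Union>S \<inter> \<Union>V" by fact
    have o1: "openin T (\<Union>S)" and o2: "openin T (\<Union>V)" and s1: "S \<subseteq> topspace T // R"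
      using a by auto
    have "openin T (\<Union>(S \<inter> V))" unfolding eq using o1 o2 by (rule openin_Int)
    then show "S \<inter> V \<subseteq> topspace T // R \<and> openin T (\<Union>(S \<inter> V))" using s1 by blast
  next
    fix K assume "\<forall>S\<in>K. S \<subseteq> topspace T // R \<and> openin T (\<Union>S)"
    moreover have "\<Union>(\<Union>K) = \<Union>((\<lambda>S. \<Union>S) ` K)" by auto
    moreover have "openin T (\<Union>((\<lambda>S. \<Union>S) ` K))"
      using calculation(1) by (intro openin_Union) auto
    ultimately show "\<Union>K \<subseteq> topspace T // R \<and> openin T (\<Union>(\<Union>K))"
      by auto
  qed
  then show ?thesis unfolding quotient_topology_def by (simp add: topology_inverse')
qed

lemma quot_topspace:
  assumes "equiv (topspace T) R"
  shows "topspace (quotient_topology T R) = topspace T // R"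
proof -
  have "openin (quotient_topology T R) (topspace T // R)"
    using assms by (simp add: quot_open Union_quotient)
  then have "topspace T // R \<subseteq> topspace (quotient_topology T R)" by (rule openin_subset)
  moreover have "topspace (quotient_topology T R) \<subseteq> topspace T // R"
    using quot_open[OF assms] by (metis openin_topspace)
  ultimately show ?thesis by blast
qed

lemma continuous_map_generated:
  assumes "f \<in> topspace Z \<rightarrow> \<Union>S"
    and "\<And>s. s \<in> S \<Longrightarrow> openin Z {x \<in> topspace Z. f x \<in> s}"
  shows "continuous_map Z (topology_generated_by S) f"
  unfolding continuous_map_def
proof (intro conjI allI impI)
  show "f \<in> topspace Z \<rightarrow> topspace (topology_generated_by S)" using assms(1) by simp
  fix U assume "openin (topology_generated_by S) U"
  then have "generate_topology_on S U" by (simp add: openin_topology_generated_by_iff)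
  then show "openin Z {x \<in> topspace Z. f x \<in> U}"
  proof induct
    case Empty then show ?case by simp
  next
    case (Int a b)
    have "{x \<in> topspace Z. f x \<in> a \<inter> b} = {x \<in> topspace Z. f x \<in> a} \<inter> {x \<in> topspace Z. f x \<in> b}" by auto
    then show ?case using Int by auto
  next
    case (UN K)
    have "{x \<in> topspace Z. f x \<in> \<Union>K} = (\<Union>k\<in>K. {x \<in> topspace Z. f x \<in> k})" by auto
    then show ?case using UN by auto
  next
    case (Basis s) then show ?case using assms(2) by auto
  qed
qed

lemma compact_open_topspace: "topspace (compact_open X Y) = cmaps X Y"
proof -
  have "cmaps X Y \<in> {{f \<in> cmaps X Y. f ` K \<subseteq> U} | K U. compactin X K \<and> openin Y U}"
    by (rule CollectI, rule exI[of _ "{}"], rule exI[of _ "topspace Y"]) auto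
  then show ?thesis unfolding compact_open_def by auto
qed

lemma compact_open_sub:
  assumes "compactin X K" "openin Y U"
  shows "openin (compact_open X Y) {f \<in> cmaps X Y. f ` K \<subseteq> U}"
  unfolding compact_open_def openin_topology_generated_by_iff
  by (rule generate_topology_on.Basis) (use assms in blast)

lemma continuous_into_compact_open:
  assumes "f \<in> topspace Z \<rightarrow> cmaps X Y"
    and "\<And>K U. compactin X K \<Longrightarrow> openin Y U \<Longrightarrow> openin Z {z \<in> topspace Z. f z ` K \<subseteq> U}"
  shows "continuous_map Z (compact_open X Y) f"
  unfolding compact_open_def
proof (rule continuous_map_generated)
  show "f \<in> topspace Z \<rightarrow> \<Union>{{f \<in> cmaps X Y. f ` K \<subseteq> U} |K U. compactin X K \<and> openin Y U}"
    using compact_open_topspace[of X Y] assms(1) unfolding compact_open_def by auto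
  fix s assume "s \<in> {{f \<in> cmaps X Y. f ` K \<subseteq> U} |K U. compactin X K \<and> openin Y U}"
  then obtain K U where s: "s = {f \<in> cmaps X Y. f ` K \<subseteq> U}" "compactin X K" "openin Y U" by auto
  have "{x \<in> topspace Z. f x \<in> s} = {z \<in> topspace Z. f z ` K \<subseteq> U}" using s(1) assms(1) by auto
  then show "openin Z {x \<in> topspace Z. f x \<in> s}" using assms(2) s by auto
qed

lemma env_equiv:
  fixes D :: "'g::group_add \<Rightarrow> 'w set" and TG :: "'g topology"
  assumes tg: "topspace TG = UNIV"
    and sub: "\<And>g. D g \<subseteq> topspace W" and d0: "D 0 = topspace W"
    and t0: "\<And>y. y \<in> topspace W \<Longrightarrow> th 0 y = y"
    and tmap: "\<And>g y. y \<in> D (- g) \<Longrightarrow> th g y \<in> D g"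
    and tinv: "\<And>g y. y \<in> D (- g) \<Longrightarrow> th (- g) (th g y) = y"
    and tcomp: "\<And>g h y. y \<in> D (- h) \<Longrightarrow> th h y \<in> D (- g) \<Longrightarrow>
          y \<in> D (- (g + h)) \<and> th g (th h y) = th (g + h) y"
  shows "equiv (topspace (prod_topology TG W)) (env_rel W D th)"
proof (rule equivI)
  show "env_rel W D th \<subseteq> topspace (prod_topology TG W) \<times> topspace (prod_topology TG W)"
  proof clarify
    fix g x h y assume "((g, x), (h, y)) \<in> env_rel W D th"
    then have "x \<in> topspace W" "x \<in> D (- (- h + g))" "th (- h + g) x = y"
      by (auto simp: env_rel_def minus_add)
    then show "(g, x) \<in> topspace (prod_topology TG W) \<and> (h, y) \<in> topspace (prod_topology TG W)"
      using tmap sub tg by auto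
  qed
  show "refl_on (topspace (prod_topology TG W)) (env_rel W D th)"
    unfolding refl_on_def env_rel_def using d0 t0 by auto
  show "sym (env_rel W D th)"
  proof (rule symI, clarify)
    fix g x h y assume "((g, x), (h, y)) \<in> env_rel W D th"
    then have a: "x \<in> topspace W" "x \<in> D (- (- h + g))" "th (- h + g) x = y"
      by (auto simp: env_rel_def minus_add)
    have "y \<in> D (- h + g)" using tmap[OF a(2)] a(3) by simp
    moreover have "th (- g + h) y = x" using tinv[OF a(2)] a(3) by (simp add: minus_add)
    ultimately show "((h, y), (g, x)) \<in> env_rel W D th"
      using sub unfolding env_rel_def by auto
  qed
  show "trans (env_rel W D th)"
  proof (rule transI, clarify)
    fix g x h y k z assume "((g, x), (h, y)) \<in> env_rel W D th" "((h, y), (k, z)) \<in> env_rel W D th"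
    then have a: "x \<in> topspace W" "x \<in> D (- (- h + g))" "th (- h + g) x = y"
      and b: "y \<in> D (- (- k + h))" "th (- k + h) y = z"
      by (auto simp: env_rel_def minus_add)
    have "th (- h + g) x \<in> D (- (- k + h))" using a b by simp
    from tcomp[OF a(2) this] have
      c: "x \<in> D (- (- k + h + (- h + g)))" "th (- k + h) (th (- h + g) x) = th (- k + h + (- h + g)) x" by auto
    have e: "- k + h + (- h + g) = - k + g" by (simp add: add.assoc[symmetric])
    show "((g, x), (k, z)) \<in> env_rel W D th"
      using a c b unfolding e env_rel_def by (auto simp: minus_add)
  qed
qed

locale envs =
  fixes TG :: "'g::group_add topology" and Y :: "'y topology" and X :: "'x topology"
    and D :: "'g \<Rightarrow> 'y set" and th :: "'g \<Rightarrow> 'y \<Rightarrow> 'y"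
  assumes tgrp: "topological_group TG" and nice: "nice_partial_action TG Y D th"
    and cpt: "compact_space X"
begin

lemma tg_top: "topspace TG = UNIV" using tgrp by (simp add: topological_group_def)

lemma tpa: "topological_partial_action Y D th" using nice by (simp add: nice_partial_action_def)

lemma Dopen: "openin Y (D g)" using tpa by (simp add: topological_partial_action_def)
lemma Dsub: "D g \<subseteq> topspace Y" using Dopen by (simp add: openin_subset)
lemma D0: "D 0 = topspace Y" using tpa by (simp add: topological_partial_action_def)
lemma th0: "y \<in> topspace Y \<Longrightarrow> th 0 y = y" using tpa by (simp add: topological_partial_action_def)
lemma homeo: "homeomorphic_map (subtopology Y (D (- g))) (subtopology Y (D g)) (th g)"
  using tpa by (simp add: topological_partial_action_def)
lemma tinv: "y \<in> D (- g) \<Longrightarrow> th (- g) (th g y) = y"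
  using tpa by (simp add: topological_partial_action_def)
lemma tcomp: "y \<in> D (- h) \<Longrightarrow> th h y \<in> D (- g) \<Longrightarrow> y \<in> D (- (g + h)) \<and> th g (th h y) = th (g + h) y"
  using tpa unfolding topological_partial_action_def by blast
lemma tmap: "y \<in> D (- g) \<Longrightarrow> th g y \<in> D g"
proof -
  assume y: "y \<in> D (- g)"
  have "th g ` topspace (subtopology Y (D (- g))) = topspace (subtopology Y (D g))"
    using homeo by (rule homeomorphic_imp_surjective_map)
  then show ?thesis using y Dsub[of "- g"] Dsub[of g] by auto
qed
lemma thcont: "continuous_map (subtopology Y (D (- g))) Y (th g)"
  using homeomorphic_imp_continuous_map[OF homeo[of g]] continuous_map_in_subtopology by blast

definition "Dom = {(g, y). y \<in> D (- g)}"
lemma Dom_open: "openin (prod_topology TG Y) Dom"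
  using nice by (simp add: nice_partial_action_def Dom_def)
lemma act_cont: "continuous_map (subtopology (prod_topology TG Y) Dom) Y (\<lambda>(g, y). th g y)"
  using nice by (simp add: nice_partial_action_def Dom_def)

abbreviation "GY \<equiv> prod_topology TG Y"
abbreviation "R \<equiv> env_rel Y D th"
abbreviation "YG \<equiv> enveloping_space TG Y D th"
abbreviation "CY \<equiv> compact_open X Y"
abbreviation "GC \<equiv> prod_topology TG CY"
abbreviation "Rc \<equiv> env_rel CY (cmaps_dom X Y D) (cmaps_act X th)"
abbreviation "CG \<equiv> enveloping_space TG CY (cmaps_dom X Y D) (cmaps_act X th)"
abbreviation "CYG \<equiv> compact_open X YG"

lemma topGY: "topspace GY = UNIV \<times> topspace Y" by (simp add: tg_top)
lemma topGC: "topspace GC = UNIV \<times> cmaps X Y" by (simp add: tg_top compact_open_topspace)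

lemma equivR: "equiv (topspace GY) R"
  by (rule env_equiv[OF tg_top Dsub D0 th0 tmap tinv tcomp])

lemma cm_img: "f \<in> cmaps X Y \<Longrightarrow> x \<in> topspace X \<Longrightarrow> f x \<in> topspace Y"
  unfolding cmaps_def using continuous_map_image_subset_topspace by blast

lemma equivRc: "equiv (topspace GC) Rc"
proof (rule env_equiv[OF tg_top])
  show "cmaps_dom X Y D g \<subseteq> topspace CY" for g
    by (auto simp: cmaps_dom_def compact_open_topspace)
  show "cmaps_dom X Y D 0 = topspace CY"
    by (auto simp: cmaps_dom_def compact_open_topspace D0 cm_img)
  show "cmaps_act X th 0 f = f" if "f \<in> topspace CY" for f
  proof
    fix x show "cmaps_act X th 0 f x = f x"
      using that by (cases "x \<in> topspace X")
        (auto simp: cmaps_act_def compact_open_topspace cm_img th0 cmaps_def extensional_def)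
  qed
  show "cmaps_act X th g f \<in> cmaps_dom X Y D g" if f: "f \<in> cmaps_dom X Y D (- g)" for g f
  proof -
    have fc: "continuous_map X Y f" "f ` topspace X \<subseteq> D (- g)"
      using f by (auto simp: cmaps_dom_def cmaps_def)
    have "continuous_map X (subtopology Y (D (- g))) f"
      using fc by (auto simp: continuous_map_in_subtopology)
    then have "continuous_map X Y (th g \<circ> f)" using thcont by (rule continuous_map_compose)
    then have "continuous_map X Y (cmaps_act X th g f)"
      by (rule continuous_map_eq) (simp add: cmaps_act_def)
    then show ?thesis using fc(2) tmap
      by (auto simp: cmaps_dom_def cmaps_def cmaps_act_def)
  qed
  show "cmaps_act X th (- g) (cmaps_act X th g f) = f" if f: "f \<in> cmaps_dom X Y D (- g)" for g f
  proof
    fix x show "cmaps_act X th (- g) (cmaps_act X th g f) x = f x"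
      using f tinv by (cases "x \<in> topspace X")
        (auto simp: cmaps_act_def cmaps_dom_def cmaps_def extensional_def)
  qed
  show "f \<in> cmaps_dom X Y D (- (g + h)) \<and> cmaps_act X th g (cmaps_act X th h f) = cmaps_act X th (g + h) f"
    if f: "f \<in> cmaps_dom X Y D (- h)" "cmaps_act X th h f \<in> cmaps_dom X Y D (- g)" for g h f
  proof -
    have p: "f x \<in> D (- (g + h)) \<and> th g (th h (f x)) = th (g + h) (f x)" if x: "x \<in> topspace X" for x
    proof (rule tcomp)
      show "f x \<in> D (- h)" using f(1) x by (auto simp: cmaps_dom_def)
      show "th h (f x) \<in> D (- g)" using f(2) x by (auto simp: cmaps_dom_def cmaps_act_def)
    qed
    show ?thesis using f(1) p by (auto simp: cmaps_dom_def cmaps_act_def)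
  qed
qed

lemma YG_open: "openin YG U \<longleftrightarrow> U \<subseteq> topspace GY // R \<and> openin GY (\<Union>U)"
  unfolding enveloping_space_def by (rule quot_open[OF equivR])
lemma YG_top: "topspace YG = topspace GY // R"
  unfolding enveloping_space_def by (rule quot_topspace[OF equivR])
lemma CG_open: "openin CG U \<longleftrightarrow> U \<subseteq> topspace GC // Rc \<and> openin GC (\<Union>U)"
  unfolding enveloping_space_def by (rule quot_open[OF equivRc])
lemma CG_top: "topspace CG = topspace GC // Rc"
  unfolding enveloping_space_def by (rule quot_topspace[OF equivRc])

definition "q p = R `` {p}"

lemma q_mem: "p \<in> topspace GY \<Longrightarrow> q p \<in> topspace YG"
  by (simp add: q_def YG_top quotientI)

lemma q_self: "p \<in> topspace GY \<Longrightarrow> p \<in> q p"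
  unfolding q_def by (rule equiv_class_self[OF equivR])

lemma q_eq: "p \<in> topspace GY \<Longrightarrow> p' \<in> topspace GY \<Longrightarrow> q p = q p' \<longleftrightarrow> (p, p') \<in> R"
  unfolding q_def by (rule eq_equiv_class_iff[OF equivR])

lemma q_preimage:
  assumes "U \<subseteq> topspace YG"
  shows "{p \<in> topspace GY. q p \<in> U} = \<Union>U"
proof
  show "{p \<in> topspace GY. q p \<in> U} \<subseteq> \<Union>U" using q_self by blast
  show "\<Union>U \<subseteq> {p \<in> topspace GY. q p \<in> U}"
  proof clarify
    fix p c assume pc: "p \<in> c" "c \<in> U"
    then have c: "c \<in> topspace GY // R" using assms YG_top by auto
    then obtain p' where p': "c = R `` {p'}" "p' \<in> topspace GY" by (rule quotientE)
    have "p \<in> topspace GY" using in_quotient_imp_subset[OF equivR c] pc by auto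
    moreover have "q p = c" using p' pc equiv_class_eq[OF equivR] unfolding q_def
      by (metis Image_singleton_iff)
    ultimately show "p \<in> topspace GY \<and> q p \<in> U" using pc by auto
  qed
qed

lemma q_cont: "continuous_map GY YG q"
  unfolding continuous_map_def
proof (intro conjI allI impI)
  show "q \<in> topspace GY \<rightarrow> topspace YG" using q_mem by auto
  fix U assume U: "openin YG U"
  then have "U \<subseteq> topspace YG" by (rule openin_subset)
  then show "openin GY {p \<in> topspace GY. q p \<in> U}"
    using U YG_open q_preimage by simp
qed

lemma shift_cont: "continuous_map TG TG (\<lambda>h. a + h)"
proof -
  have "continuous_map TG (prod_topology TG TG) (\<lambda>h. (a, h))"
    by (intro continuous_map_pairedI) (auto simp: tg_top)
  moreover have "continuous_map (prod_topology TG TG) TG (\<lambda>(g, h). g + h)"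
    using tgrp by (simp add: topological_group_def)
  ultimately have "continuous_map TG TG ((\<lambda>(g, h). g + h) \<circ> (\<lambda>h. (a, h)))"
    by (rule continuous_map_compose)
  then show ?thesis by (simp add: o_def)
qed

lemma iota_open:
  assumes V: "openin Y V"
  shows "openin YG ((\<lambda>y. q (g, y)) ` V)"
proof -
  have Vsub: "V \<subseteq> topspace Y" using V openin_subset by auto
  define E where "E = {p \<in> topspace (subtopology GY Dom). (\<lambda>(k, y). th k y) p \<in> V}"
  have "openin (subtopology GY Dom) E" unfolding E_def
    by (rule openin_continuous_map_preimage[OF act_cont V])
  then have Eo: "openin GY E" using Dom_open by (rule openin_trans_full)
  have sc: "continuous_map GY GY (\<lambda>(h, z). (- g + h, z))"
  proof -
    have "continuous_map GY GY (\<lambda>p. ((\<lambda>h. - g + h) (fst p), snd p))"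
      by (intro continuous_map_pairedI continuous_map_compose[OF continuous_map_fst shift_cont, unfolded o_def]
          continuous_map_snd)
    then show ?thesis by (simp add: case_prod_beta')
  qed
  have "openin GY {p \<in> topspace GY. (\<lambda>(h, z). (- g + h, z)) p \<in> E}"
    by (rule openin_continuous_map_preimage[OF sc Eo])
  moreover have "\<Union>((\<lambda>y. q (g, y)) ` V) = {p \<in> topspace GY. (\<lambda>(h, z). (- g + h, z)) p \<in> E}"
  proof (intro set_eqI iffI)
    fix p assume "p \<in> \<Union>((\<lambda>y. q (g, y)) ` V)"
    then obtain y where y: "y \<in> V" "p \<in> q (g, y)" by auto
    obtain h z where p: "p = (h, z)" by (cases p)
    have "((g, y), (h, z)) \<in> R" using y p by (simp add: q_def)
    then have "((h, z), (g, y)) \<in> R" using equivR by (meson equiv_def symD)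
    then have "z \<in> topspace Y" "z \<in> D (- h + g)" "th (- g + h) z = y"
      by (auto simp: env_rel_def)
    then show "p \<in> {p \<in> topspace GY. (\<lambda>(h, z). (- g + h, z)) p \<in> E}"
      using p y Dsub by (auto simp: E_def Dom_def tg_top minus_add)
  next
    fix p assume "p \<in> {p \<in> topspace GY. (\<lambda>(h, z). (- g + h, z)) p \<in> E}"
    moreover obtain h z where p: "p = (h, z)" by (cases p)
    ultimately have a: "z \<in> topspace Y" "z \<in> D (- h + g)" "th (- g + h) z \<in> V"
      by (auto simp: E_def Dom_def tg_top minus_add)
    then have "((h, z), (g, th (- g + h) z)) \<in> R" by (auto simp: env_rel_def)
    then have "((g, th (- g + h) z), (h, z)) \<in> R" using equivR by (meson equiv_def symD)
    then show "p \<in> \<Union>((\<lambda>y. q (g, y)) ` V)" using a p by (auto simp: q_def)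
  qed
  moreover have "(\<lambda>y. q (g, y)) ` V \<subseteq> topspace GY // R"
    using Vsub q_mem YG_top by (auto simp: tg_top)
  ultimately show ?thesis by (simp add: YG_open)
qed

definition "Og g = (\<lambda>y. q (g, y)) ` topspace Y"

lemma Og_open: "openin YG (Og g)" unfolding Og_def by (rule iota_open) simp

lemma iota_inj: "inj_on (\<lambda>y. q (g, y)) (topspace Y)"
proof (rule inj_onI)
  fix y y' assume a: "y \<in> topspace Y" "y' \<in> topspace Y" "q (g, y) = q (g, y')"
  then have "((g, y), (g, y')) \<in> R" using q_eq by (simp add: tg_top)
  then show "y = y'" using th0 by (auto simp: env_rel_def)
qed

lemma iota_cont: "continuous_map Y YG (\<lambda>y. q (g, y))"
proof -
  have "continuous_map Y GY (\<lambda>y. (g, y))"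
    by (intro continuous_map_pairedI) (auto simp: tg_top)
  then show ?thesis using continuous_map_compose[OF _ q_cont] by (simp add: o_def)
qed

definition "iinv g = inv_into (topspace Y) (\<lambda>y. q (g, y))"

lemma iinv_q: "y \<in> topspace Y \<Longrightarrow> iinv g (q (g, y)) = y"
  unfolding iinv_def by (rule inv_into_f_f[OF iota_inj])

lemma q_iinv: "F \<in> Og g \<Longrightarrow> q (g, iinv g F) = F \<and> iinv g F \<in> topspace Y"
  unfolding Og_def using iinv_q by auto

lemma iinv_cont: "continuous_map (subtopology YG (Og g)) Y (iinv g)"
  unfolding continuous_map_def
proof (intro conjI allI impI)
  show "iinv g \<in> topspace (subtopology YG (Og g)) \<rightarrow> topspace Y" using q_iinv by auto
  fix V assume V: "openin Y V"
  then have Vs: "V \<subseteq> topspace Y" by (simp add: openin_subset)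
  have "{F \<in> topspace (subtopology YG (Og g)). iinv g F \<in> V} = (\<lambda>y. q (g, y)) ` V"
  proof (intro set_eqI iffI)
    fix F assume "F \<in> {F \<in> topspace (subtopology YG (Og g)). iinv g F \<in> V}"
    then show "F \<in> (\<lambda>y. q (g, y)) ` V" using q_iinv[of F g] by (metis (mono_tags, lifting) IntE mem_Collect_eq rev_image_eqI topspace_subtopology)
  next
    fix F assume "F \<in> (\<lambda>y. q (g, y)) ` V"
    then obtain y where y: "y \<in> V" "F = q (g, y)" by auto
    then show "F \<in> {F \<in> topspace (subtopology YG (Og g)). iinv g F \<in> V}"
      using Vs iinv_q q_mem by (auto simp: Og_def tg_top)
  qed
  moreover have "openin (subtopology YG (Og g)) ((\<lambda>y. q (g, y)) ` V)"
    using iota_open[OF V] Vs Og_open by (auto simp: openin_open_subtopology Og_def)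
  ultimately show "openin (subtopology YG (Og g)) {F \<in> topspace (subtopology YG (Og g)). iinv g F \<in> V}"
    by simp
qed

definition "Phi0 p = (\<lambda>x\<in>topspace X. q (fst p, snd p x))"
definition "psi g F = (\<lambda>x\<in>topspace X. iinv g (F x))"
definition "M g = {F \<in> cmaps X YG. F ` topspace X \<subseteq> Og g}"

lemma Phi0_cm: "f \<in> cmaps X Y \<Longrightarrow> Phi0 (g, f) \<in> M g"
proof -
  assume f: "f \<in> cmaps X Y"
  have "continuous_map X YG ((\<lambda>y. q (g, y)) \<circ> f)"
    using f iota_cont by (auto simp: cmaps_def intro: continuous_map_compose)
  then have "continuous_map X YG (Phi0 (g, f))"
    by (rule continuous_map_eq) (simp add: Phi0_def)
  then show ?thesis using f cm_img by (auto simp: M_def cmaps_def Phi0_def Og_def)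
qed

lemma M_open: "openin CYG (M g)"
  unfolding M_def
  by (rule compact_open_sub) (use cpt Og_open in \<open>auto simp: compact_space_def\<close>)

lemma psi_cm: "F \<in> M g \<Longrightarrow> psi g F \<in> cmaps X Y"
proof -
  assume F: "F \<in> M g"
  then have "continuous_map X (subtopology YG (Og g)) F"
    by (auto simp: M_def cmaps_def continuous_map_in_subtopology)
  then have "continuous_map X Y (iinv g \<circ> F)" using iinv_cont by (rule continuous_map_compose)
  then have "continuous_map X Y (psi g F)" by (rule continuous_map_eq) (simp add: psi_def)
  then show ?thesis by (simp add: cmaps_def psi_def)
qed

lemma Phi0_psi: "F \<in> M g \<Longrightarrow> Phi0 (g, psi g F) = F"
proof
  fix x assume F: "F \<in> M g"
  show "Phi0 (g, psi g F) x = F x"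
  proof (cases "x \<in> topspace X")
    case True
    then have "F x \<in> Og g" using F by (auto simp: M_def)
    then show ?thesis using True q_iinv by (simp add: Phi0_def psi_def)
  next
    case False
    then show ?thesis using F by (simp add: Phi0_def M_def cmaps_def extensional_def)
  qed
qed

lemma psi_Phi0: "f \<in> cmaps X Y \<Longrightarrow> psi g (Phi0 (g, f)) = f"
proof
  fix x assume f: "f \<in> cmaps X Y"
  show "psi g (Phi0 (g, f)) x = f x"
    using f cm_img iinv_q by (cases "x \<in> topspace X") (auto simp: Phi0_def psi_def cmaps_def extensional_def)
qed

lemma Phi0_resp: "(p, p') \<in> Rc \<Longrightarrow> Phi0 p = Phi0 p'"
proof -
  assume r: "(p, p') \<in> Rc"
  obtain g f h f' where p: "p = (g, f)" "p' = (h, f')" by (cases p, cases p')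
  have a: "f \<in> cmaps X Y" "f \<in> cmaps_dom X Y D (- g + h)" "cmaps_act X th (- h + g) f = f'"
    using r p by (auto simp: env_rel_def compact_open_topspace)
  show ?thesis
  proof
    fix x show "Phi0 p x = Phi0 p' x"
    proof (cases "x \<in> topspace X")
      case True
      have "((g, f x), (h, f' x)) \<in> R"
        using a True cm_img[OF a(1) True] by (auto simp: env_rel_def cmaps_dom_def cmaps_act_def)
      then have "q (g, f x) = q (h, f' x)" unfolding q_def by (rule equiv_class_eq[OF equivR])
      then show ?thesis using True p by (simp add: Phi0_def)
    qed (simp add: Phi0_def)
  qed
qed

lemma Phi0_inj:
  assumes f: "f \<in> cmaps X Y" and f': "f' \<in> cmaps X Y" and e: "Phi0 (g, f) = Phi0 (h, f')"
  shows "((g, f), (h, f')) \<in> Rc"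
proof -
  have r: "f x \<in> D (- g + h) \<and> th (- h + g) (f x) = f' x" if x: "x \<in> topspace X" for x
  proof -
    have "Phi0 (g, f) x = Phi0 (h, f') x" using e by simp
    then have "q (g, f x) = q (h, f' x)" using x by (simp add: Phi0_def)
    then have "((g, f x), (h, f' x)) \<in> R" using q_eq cm_img f f' x by (simp add: tg_top)
    then show ?thesis by (simp add: env_rel_def)
  qed
  have "cmaps_act X th (- h + g) f = f'"
  proof
    fix x show "cmaps_act X th (- h + g) f x = f' x"
      using r f' by (cases "x \<in> topspace X") (auto simp: cmaps_act_def cmaps_def extensional_def)
  qed
  then show ?thesis using f r by (auto simp: env_rel_def compact_open_topspace cmaps_dom_def)
qed

definition "Phi c = Phi0 (SOME p. p \<in> c)"

lemma Phi_eq: "c \<in> topspace CG \<Longrightarrow> p \<in> c \<Longrightarrow> Phi c = Phi0 p"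
proof -
  assume c: "c \<in> topspace CG" and p: "p \<in> c"
  have c': "c \<in> topspace GC // Rc" using c CG_top by simp
  have "(SOME p. p \<in> c) \<in> c" using p by (rule someI)
  then have "((SOME p. p \<in> c), p) \<in> Rc" using in_quotient_imp_in_rel[OF equivRc c'] p by auto
  then show ?thesis unfolding Phi_def by (rule Phi0_resp)
qed

lemma CG_elem:
  assumes "c \<in> topspace CG"
  obtains g f where "c = Rc `` {(g, f)}" "f \<in> cmaps X Y" "(g, f) \<in> c"
proof -
  have c': "c \<in> topspace GC // Rc" using assms CG_top by simp
  then obtain p where p: "c = Rc `` {p}" "p \<in> topspace GC" by (rule quotientE)
  obtain g f where "p = (g, f)" by (cases p)
  then show ?thesis using that p equiv_class_self[OF equivRc p(2)] topGC by auto
qed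

lemma CG_class: "f \<in> cmaps X Y \<Longrightarrow> Rc `` {(g, f)} \<in> topspace CG \<and> (g, f) \<in> Rc `` {(g, f)}"
proof
  assume f: "f \<in> cmaps X Y"
  then have p: "(g, f) \<in> topspace GC" using topGC by simp
  then show "Rc `` {(g, f)} \<in> topspace CG" unfolding CG_top by (rule quotientI)
  show "(g, f) \<in> Rc `` {(g, f)}" using equiv_class_self[OF equivRc p] .
qed

lemma Phi0_cont: "continuous_map GC CYG Phi0"
proof (rule continuous_into_compact_open)
  show "Phi0 \<in> topspace GC \<rightarrow> cmaps X YG"
    using Phi0_cm topGC by (auto simp: M_def)
  fix K V assume K: "compactin X K" and V: "openin YG V"
  have Ks: "K \<subseteq> topspace X" using K by (rule compactin_subset_topspace)
  define V' where "V' = {p \<in> topspace GY. q p \<in> V}"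
  have V'o: "openin GY V'" unfolding V'_def by (rule openin_continuous_map_preimage[OF q_cont V])
  show "openin GC {z \<in> topspace GC. Phi0 z ` K \<subseteq> V}"
  proof (subst openin_subopen, intro ballI)
    fix p assume p: "p \<in> {z \<in> topspace GC. Phi0 z ` K \<subseteq> V}"
    obtain g0 f0 where p0: "p = (g0, f0)" by (cases p)
    have f0: "f0 \<in> cmaps X Y" using p p0 topGC by auto
    have "compactin Y (f0 ` K)" using K f0 by (auto simp: cmaps_def intro: image_compactin)
    moreover have "{g0} \<times> f0 ` K \<subseteq> V'"
    proof clarify
      fix x assume x: "x \<in> K"
      have "Phi0 (g0, f0) x \<in> V" using p p0 x by auto
      then show "(g0, f0 x) \<in> V'" using x Ks cm_img[OF f0] by (auto simp: V'_def Phi0_def tg_top)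
    qed
    ultimately obtain A B where AB: "openin TG A" "openin Y B" "g0 \<in> A" "f0 ` K \<subseteq> B" "A \<times> B \<subseteq> V'"
      using tube_lemma_right[OF V'o] by (metis UNIV_I tg_top)
    define T where "T = A \<times> {f \<in> cmaps X Y. f ` K \<subseteq> B}"
    have "openin GC T" unfolding T_def openin_prod_Times_iff
      using AB compact_open_sub[OF K AB(2)] by auto
    moreover have "p \<in> T" using p0 f0 AB by (auto simp: T_def)
    moreover have "T \<subseteq> {z \<in> topspace GC. Phi0 z ` K \<subseteq> V}"
    proof clarify
      fix g f assume gf: "(g, f) \<in> T"
      then have f: "f \<in> cmaps X Y" by (auto simp: T_def)
      have "Phi0 (g, f) ` K \<subseteq> V"
      proof clarify
        fix x assume x: "x \<in> K"
        have "(g, f x) \<in> V'" using gf x AB(5) by (auto simp: T_def)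
        then show "Phi0 (g, f) x \<in> V" using x Ks by (auto simp: V'_def Phi0_def)
      qed
      then show "(g, f) \<in> topspace GC \<and> Phi0 (g, f) ` K \<subseteq> V" using f topGC by auto
    qed
    ultimately show "\<exists>T. openin GC T \<and> p \<in> T \<and> T \<subseteq> {z \<in> topspace GC. Phi0 z ` K \<subseteq> V}"
      by blast
  qed
qed

lemma Phi_cont: "continuous_map CG CYG Phi"
  unfolding continuous_map_def
proof (intro conjI allI impI)
  show "Phi \<in> topspace CG \<rightarrow> topspace CYG"
  proof
    fix c assume c: "c \<in> topspace CG"
    then obtain g f where gf: "c = Rc `` {(g, f)}" "f \<in> cmaps X Y" "(g, f) \<in> c" by (rule CG_elem)
    then show "Phi c \<in> topspace CYG" using Phi_eq[OF c gf(3)] Phi0_cm[OF gf(2)]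
      by (simp add: compact_open_topspace M_def)
  qed
  fix V assume V: "openin CYG V"
  have "\<Union>{c \<in> topspace CG. Phi c \<in> V} = {p \<in> topspace GC. Phi0 p \<in> V}"
  proof (intro set_eqI iffI)
    fix p assume "p \<in> \<Union>{c \<in> topspace CG. Phi c \<in> V}"
    then obtain c where c: "c \<in> topspace CG" "Phi c \<in> V" "p \<in> c" by auto
    have "p \<in> topspace GC" using in_quotient_imp_subset[OF equivRc] c CG_top by auto
    then show "p \<in> {p \<in> topspace GC. Phi0 p \<in> V}" using Phi_eq[OF c(1) c(3)] c by auto
  next
    fix p assume p: "p \<in> {p \<in> topspace GC. Phi0 p \<in> V}"
    then have pt: "p \<in> topspace GC" by simp
    have "Rc `` {p} \<in> topspace CG" unfolding CG_top using pt by (rule quotientI)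
    moreover have "p \<in> Rc `` {p}" using equiv_class_self[OF equivRc pt] .
    ultimately have "Rc `` {p} \<in> topspace CG" "p \<in> Rc `` {p}" by auto
    then show "p \<in> \<Union>{c \<in> topspace CG. Phi c \<in> V}" using Phi_eq p by auto
  qed
  moreover have "openin GC {p \<in> topspace GC. Phi0 p \<in> V}"
    by (rule openin_continuous_map_preimage[OF Phi0_cont V])
  ultimately show "openin CG {c \<in> topspace CG. Phi c \<in> V}"
    unfolding CG_open using CG_top by auto
qed

lemma Phi_image: "Phi ` topspace CG = (\<Union>g. M g)"
proof (intro set_eqI iffI)
  fix F assume "F \<in> Phi ` topspace CG"
  then obtain c where c: "c \<in> topspace CG" "F = Phi c" by auto
  from c(1) obtain g f where gf: "c = Rc `` {(g, f)}" "f \<in> cmaps X Y" "(g, f) \<in> c" by (rule CG_elem)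
  then have "F = Phi0 (g, f)" using c Phi_eq by auto
  then show "F \<in> (\<Union>g. M g)" using Phi0_cm[OF gf(2), of g] by blast
next
  fix F assume "F \<in> (\<Union>g. M g)"
  then obtain g where F: "F \<in> M g" by auto
  have f: "psi g F \<in> cmaps X Y" using F by (rule psi_cm)
  from CG_class[OF f, of g] have "Phi (Rc `` {(g, psi g F)}) = F"
    using Phi_eq Phi0_psi[OF F] by auto
  then show "F \<in> Phi ` topspace CG" using CG_class[OF f, of g] by (metis image_eqI)
qed

lemma U_open: "openin CYG (Phi ` topspace CG)"
  unfolding Phi_image using M_open by auto

lemma Phi_inj: "inj_on Phi (topspace CG)"
proof (rule inj_onI)
  fix c c' assume c: "c \<in> topspace CG" and c': "c' \<in> topspace CG" and e: "Phi c = Phi c'"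
  obtain g f where gf: "c = Rc `` {(g, f)}" "f \<in> cmaps X Y" "(g, f) \<in> c" using c by (rule CG_elem)
  obtain h f' where hf: "c' = Rc `` {(h, f')}" "f' \<in> cmaps X Y" "(h, f') \<in> c'" using c' by (rule CG_elem)
  have "Phi0 (g, f) = Phi0 (h, f')" using e Phi_eq c c' gf hf by metis
  then have "((g, f), (h, f')) \<in> Rc" using Phi0_inj gf hf by blast
  then show "c = c'" using gf hf equiv_class_eq[OF equivRc] by metis
qed

lemma psi_cont: "continuous_map (subtopology CYG (M g)) CY (psi g)"
proof (rule continuous_into_compact_open)
  have tM: "topspace (subtopology CYG (M g)) = M g"
    using M_open openin_subset by (auto simp: M_def)
  show "psi g \<in> topspace (subtopology CYG (M g)) \<rightarrow> cmaps X Y" using psi_cm tM by auto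
  fix K V assume K: "compactin X K" and V: "openin Y V"
  have Ks: "K \<subseteq> topspace X" using K by (rule compactin_subset_topspace)
  have Vs: "V \<subseteq> topspace Y" using V by (simp add: openin_subset)
  define S where "S = {F \<in> cmaps X YG. F ` K \<subseteq> (\<lambda>y. q (g, y)) ` V}"
  have So: "openin CYG S" unfolding S_def by (rule compact_open_sub[OF K iota_open[OF V]])
  have "{z \<in> topspace (subtopology CYG (M g)). psi g z ` K \<subseteq> V} = S \<inter> M g"
  proof (intro set_eqI iffI)
    fix F assume "F \<in> {z \<in> topspace (subtopology CYG (M g)). psi g z ` K \<subseteq> V}"
    then have F: "F \<in> M g" "psi g F ` K \<subseteq> V" using tM by auto
    have "F ` K \<subseteq> (\<lambda>y. q (g, y)) ` V"
    proof clarify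
      fix x assume x: "x \<in> K"
      then have "F x \<in> Og g" using F Ks by (auto simp: M_def)
      then have "F x = q (g, iinv g (F x))" using q_iinv by metis
      moreover have "iinv g (F x) \<in> V" using F(2) x Ks by (auto simp: psi_def)
      ultimately show "F x \<in> (\<lambda>y. q (g, y)) ` V" by blast
    qed
    then show "F \<in> S \<inter> M g" using F by (auto simp: S_def M_def)
  next
    fix F assume F: "F \<in> S \<inter> M g"
    have "psi g F ` K \<subseteq> V"
    proof clarify
      fix x assume x: "x \<in> K"
      then obtain y where "y \<in> V" "F x = q (g, y)" using F by (auto simp: S_def)
      then show "psi g F x \<in> V" using x Ks Vs iinv_q by (auto simp: psi_def)
    qed
    then show "F \<in> {z \<in> topspace (subtopology CYG (M g)). psi g z ` K \<subseteq> V}" using F tM by auto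
  qed
  moreover have "openin (subtopology CYG (M g)) (S \<inter> M g)"
    unfolding openin_subtopology using So by blast
  ultimately show "openin (subtopology CYG (M g)) {z \<in> topspace (subtopology CYG (M g)). psi g z ` K \<subseteq> V}"
    by simp
qed

lemma Phi_open: "openin CYG (Phi ` W)" if W: "openin CG W"
proof (subst openin_subopen, intro ballI)
  have Ws: "W \<subseteq> topspace CG" using W by (rule openin_subset)
  have UWo: "openin GC (\<Union>W)" using W CG_open by simp
  fix F0 assume "F0 \<in> Phi ` W"
  then obtain c where c: "c \<in> W" "F0 = Phi c" by auto
  have cT: "c \<in> topspace CG" using c Ws by auto
  obtain g0 f0 where gf: "c = Rc `` {(g0, f0)}" "f0 \<in> cmaps X Y" "(g0, f0) \<in> c" using cT by (rule CG_elem)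
  define N where "N = {f \<in> topspace CY. (g0, f) \<in> \<Union>W}"
  have "continuous_map CY GC (\<lambda>f. (g0, f))"
    by (intro continuous_map_pairedI) (auto simp: tg_top)
  then have No: "openin CY N" unfolding N_def using UWo by (rule openin_continuous_map_preimage)
  define T where "T = {F \<in> topspace (subtopology CYG (M g0)). psi g0 F \<in> N}"
  have "openin (subtopology CYG (M g0)) T" unfolding T_def
    by (rule openin_continuous_map_preimage[OF psi_cont No])
  then have "openin CYG T" using M_open by (rule openin_trans_full)
  moreover have "F0 \<in> T"
  proof -
    have F0: "F0 = Phi0 (g0, f0)" using c gf cT Phi_eq by auto
    have "F0 \<in> M g0" using F0 Phi0_cm[OF gf(2)] by simp
    moreover have "psi g0 F0 = f0" using F0 psi_Phi0[OF gf(2)] by simp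
    ultimately show ?thesis using M_open openin_subset gf c
      by (auto simp: T_def N_def compact_open_topspace M_def)
  qed
  moreover have "T \<subseteq> Phi ` W"
  proof
    fix F assume F: "F \<in> T"
    then have FM: "F \<in> M g0" "(g0, psi g0 F) \<in> \<Union>W" by (auto simp: T_def N_def)
    then obtain c' where c': "c' \<in> W" "(g0, psi g0 F) \<in> c'" by auto
    have "Phi c' = Phi0 (g0, psi g0 F)" using c' Ws Phi_eq by auto
    also have "\<dots> = F" using FM(1) by (rule Phi0_psi)
    finally show "F \<in> Phi ` W" using c'(1) by (metis image_eqI)
  qed
  ultimately show "\<exists>T. openin CYG T \<and> F0 \<in> T \<and> T \<subseteq> Phi ` W" by blast
qed

lemma main: "\<exists>U. openin CYG U \<and> CG homeomorphic_space subtopology CYG U"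
proof (intro exI conjI)
  let ?U = "Phi ` topspace CG"
  show "openin CYG ?U" by (rule U_open)
  have Us: "?U \<subseteq> topspace CYG" using U_open openin_subset by auto
  have "homeomorphic_map CG (subtopology CYG ?U) Phi"
  proof (rule bijective_open_imp_homeomorphic_map)
    show "continuous_map CG (subtopology CYG ?U) Phi"
      by (rule continuous_map_into_subtopology[OF Phi_cont]) auto
    show "open_map CG (subtopology CYG ?U) Phi"
      unfolding open_map_def
    proof (intro allI impI)
      fix W assume W: "openin CG W"
      have "Phi ` W \<subseteq> ?U" using openin_subset[OF W] by auto
      then show "openin (subtopology CYG ?U) (Phi ` W)"
        using Phi_open[OF W] unfolding openin_subtopology by blast
    qed
    show "Phi ` topspace CG = topspace (subtopology CYG ?U)" using Us by auto
    show "inj_on Phi (topspace CG)" by (rule Phi_inj)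
  qed
  then show "CG homeomorphic_space subtopology CYG ?U"
    by (rule homeomorphic_map_imp_homeomorphic_space)
qed

end

theorem theorem3p7:
  fixes TG :: "'g::group_add topology"
    and Y :: "'y topology"
    and X :: "'x topology"
    and D :: "'g \<Rightarrow> 'y set"
    and th :: "'g \<Rightarrow> 'y \<Rightarrow> 'y"
  assumes "topological_group TG"
    and "Hausdorff_space TG"
    and "nice_partial_action TG Y D th"
    and "compact_space X"
  shows "\<exists>U. openin (compact_open X (enveloping_space TG Y D th)) U \<and>
           enveloping_space TG (compact_open X Y) (cmaps_dom X Y D) (cmaps_act X th)
             homeomorphic_space
           subtopology (compact_open X (enveloping_space TG Y D th)) U"
proof -
  interpret envs TG Y X D th
    using assms by unfold_locales auto
  show ?thesis by (rule main)
qed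

end
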